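(* For any positive integer $g$, the number of numerical semigroups $\Lambda$ with genus $g$ satisfying $f(\Lambda) < 2 m(\Lambda)$ is $F_{g+1}$.
   Context: A numerical semigroup is a subset $\Lambda\subseteq\mathbb{N}_0$ closed under addition, containing $0$, with finite complement in $\mathbb{N}_0$. Its genus is $|\mathbb{N}_0\setminus\Lambda|$, its multiplicity $m(\Lambda)$ is its smallest nonzero element, and its Frobenius number $f(\Lambda)$ is the largest element of $\mathbb{N}_0\setminus\Lambda$. $F_n$ are the Fibonacci numbers: $F_1=F_2=1$, $F_{n+2}=F_{n+1}+F_n$. *)

theory Defs
  imports Main "HOL-Number_Theory.Fib"
begin

definition numerical_semigroup :: "nat set \<Rightarrow> bool" where
  "numerical_semigroup S \<longleftrightarrow> 0 \<in> S \<and> (\<forall>a\<in>S. \<forall>b\<in>S. a + b \<in> S) \<and> finite (UNIV - S)"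

definition ns_genus :: "nat set \<Rightarrow> nat" where
  "ns_genus S = card (UNIV - S)"

definition ns_multiplicity :: "nat set \<Rightarrow> nat" where
  "ns_multiplicity S = (LEAST x. x \<in> S \<and> x \<noteq> 0)"

definition ns_frobenius :: "nat set \<Rightarrow> nat" where
  "ns_frobenius S = Max (UNIV - S)"

end

theory Submission
  imports Defs
begin

definition phi :: "nat \<times> nat set \<Rightarrow> nat set" where
  "phi p = {x. x = 0 \<or> (fst p \<le> x \<and> x \<notin> snd p)}"

lemma phi_compl:
  assumes "A \<subseteq> {m<..<2*m}" "m \<ge> 1"
  shows "UNIV - phi (m, A) = {1..<m} \<union> A"
  using assms by (auto simp: phi_def)

lemma phi_mult:
  assumes "A \<subseteq> {m<..<2*m}" "m \<ge> 1"
  shows "ns_multiplicity (phi (m, A)) = m"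
  unfolding ns_multiplicity_def
proof (rule Least_equality)
  show "m \<in> phi (m, A) \<and> m \<noteq> 0" using assms by (auto simp: phi_def)
  show "\<And>y. y \<in> phi (m, A) \<and> y \<noteq> 0 \<Longrightarrow> m \<le> y" by (auto simp: phi_def)
qed

lemma phi_A:
  assumes "A \<subseteq> {m<..<2*m}"
  shows "A = {m<..<2*m} - phi (m, A)"
  using assms by (auto simp: phi_def)

lemma sum_fib:
  assumes "g > 0"
  shows "(\<Sum>m=2..g+1. (m - 1) choose (g + 1 - m)) = fib (g + 1)"
proof -
  have "(\<Sum>m=2..g+1. (m - 1) choose (g + 1 - m)) = (\<Sum>j=1..g. j choose (g - j))"
  proof -
    have e: "{2..g+1} = Suc ` {1..g}" by auto
    show ?thesis unfolding e by (subst sum.reindex) auto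
  qed
  also have "\<dots> = (\<Sum>j=0..g. j choose (g - j))"
  proof -
    have "{0..g} = insert 0 {1..g}" by auto
    then show ?thesis using assms by simp
  qed
  also have "\<dots> = (\<Sum>k=0..g. (g - k) choose (g - (g - k)))"
    by (rule sum.atLeastAtMost_rev[of _ 0 g, simplified])
  also have "\<dots> = (\<Sum>k=0..g. (g - k) choose k)"
    by (rule sum.cong) auto
  also have "\<dots> = fib (g + 1)" using ne_diagonal_fib by simp
  finally show ?thesis .
qed

theorem proposition2p3:
  fixes g :: nat
  assumes "g > 0"
  shows "card {S. numerical_semigroup S \<and> ns_genus S = g \<and>
                  ns_frobenius S < 2 * ns_multiplicity S} = fib (g + 1)"
proof -
  define P where "P = (SIGMA m:{2..g+1}. {A. A \<subseteq> {m<..<2*m} \<and> card A = g + 1 - m})"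
  let ?T = "{S. numerical_semigroup S \<and> ns_genus S = g \<and>
                  ns_frobenius S < 2 * ns_multiplicity S}"
  have fin: "finite A" if "A \<subseteq> {m<..<2*m}" for A :: "nat set" and m :: nat
    using that finite_subset by blast
  have gen: "ns_genus (phi (m, A)) = m - 1 + card A" if "A \<subseteq> {m<..<2*m}" "m \<ge> 1" for A m
  proof -
    have "{1..<m} \<inter> A = {}" using that by auto
    then show ?thesis unfolding ns_genus_def phi_compl[OF that]
      using fin[OF that(1)] by (simp add: card_Un_disjoint)
  qed
  have inj: "inj_on phi P"
  proof (rule inj_onI)
    fix p q assume "p \<in> P" "q \<in> P" "phi p = phi q"
    then obtain m A m' A' where p: "p = (m, A)" "A \<subseteq> {m<..<2*m}" "m \<ge> 1"
      and q: "q = (m', A')" "A' \<subseteq> {m'<..<2*m'}" "m' \<ge> 1"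
      unfolding P_def by auto
    have "m = m'" using phi_mult[OF p(2,3)] phi_mult[OF q(2,3)] \<open>phi p = phi q\<close> p q by simp
    moreover have "A = A'" using phi_A[OF p(2)] phi_A[OF q(2)] \<open>phi p = phi q\<close> p q calculation by simp
    ultimately show "p = q" using p q by simp
  qed
  have eq: "?T = phi ` P"
  proof
    show "phi ` P \<subseteq> ?T"
    proof
      fix S assume "S \<in> phi ` P"
      then obtain m A where S: "S = phi (m, A)" and A: "A \<subseteq> {m<..<2*m}" and m: "m \<ge> 2" "m \<le> g + 1"
        and cA: "card A = g + 1 - m"
        unfolding P_def by auto
      have m1: "m \<ge> 1" using m by simp
      have ns: "numerical_semigroup S"
        unfolding numerical_semigroup_def
      proof (intro conjI ballI)
        show "0 \<in> S" by (simp add: S phi_def)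
        fix a b assume "a \<in> S" "b \<in> S"
        then show "a + b \<in> S" using A by (auto simp: S phi_def)
      next
        show "finite (UNIV - S)" unfolding S phi_compl[OF A m1] using fin[OF A] by simp
      qed
      have "ns_genus S = g" using gen[OF A m1] cA m S by simp
      moreover have "ns_frobenius S < 2 * ns_multiplicity S"
      proof -
        have ne: "{1..<m} \<union> A \<noteq> {}" using m by auto
        have fu: "finite ({1..<m} \<union> A)" using fin[OF A] by simp
        have "Max ({1..<m} \<union> A) \<in> {1..<m} \<union> A" using Max_in[OF fu ne] .
        then have "Max ({1..<m} \<union> A) < 2 * m" using A by auto
        then show ?thesis unfolding ns_frobenius_def S phi_compl[OF A m1] phi_mult[OF A m1] .
      qed
      ultimately show "S \<in> ?T" using ns by simp
    qed
  next
    show "?T \<subseteq> phi ` P"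
    proof
      fix S assume "S \<in> ?T"
      then have ns: "numerical_semigroup S" and gS: "ns_genus S = g"
        and fr: "ns_frobenius S < 2 * ns_multiplicity S" by auto
      define m where "m = ns_multiplicity S"
      define A where "A = {m<..<2*m} - S"
      have finc: "finite (UNIV - S)" using ns numerical_semigroup_def by blast
      have z: "0 \<in> S" using ns numerical_semigroup_def by blast
      have "\<exists>x. x \<in> S \<and> x \<noteq> 0"
      proof (rule ccontr)
        assume "\<not> ?thesis"
        then have "{1..} \<subseteq> UNIV - S" by auto
        then show False using finc infinite_Ici finite_subset by blast
      qed
      then have mS: "m \<in> S \<and> m \<noteq> 0" unfolding m_def ns_multiplicity_def by (rule LeastI_ex)
      have mle: "\<And>x. x \<in> S \<Longrightarrow> x \<noteq> 0 \<Longrightarrow> m \<le> x"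
        unfolding m_def ns_multiplicity_def by (simp add: Least_le)
      have big: "x \<in> S" if "x \<ge> 2 * m" for x
      proof (rule ccontr)
        assume "x \<notin> S"
        then have "x \<le> Max (UNIV - S)" using finc by (simp add: Max_ge)
        then show False using fr that unfolding ns_frobenius_def m_def by simp
      qed
      have A: "A \<subseteq> {m<..<2*m}" unfolding A_def by auto
      have m1: "m \<ge> 1" using mS by simp
      have Seq: "S = phi (m, A)"
      proof (rule set_eqI)
        fix x show "x \<in> S \<longleftrightarrow> x \<in> phi (m, A)"
        proof
          assume "x \<in> S" then show "x \<in> phi (m, A)" using mle by (auto simp: phi_def A_def)
        next
          assume "x \<in> phi (m, A)"
          then have "x = 0 \<or> (m \<le> x \<and> x \<notin> A)" by (simp add: phi_def)
          then show "x \<in> S"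
          proof
            assume "x = 0" then show ?thesis using z by simp
          next
            assume h: "m \<le> x \<and> x \<notin> A"
            show ?thesis
            proof (cases "x = m")
              case True then show ?thesis using mS by simp
            next
              case False
              show ?thesis
              proof (cases "x < 2 * m")
                case True then show ?thesis using h False by (auto simp: A_def)
              next
                case False then show ?thesis using big by simp
              qed
            qed
          qed
        qed
      qed
      have gg: "g = m - 1 + card A" using gen[OF A m1] gS Seq by simp
      have m2: "m \<ge> 2"
      proof (rule ccontr)
        assume "\<not> m \<ge> 2"
        then have "m = 1" using m1 by simp
        then have "{m<..<2*m} = {}" by auto
        then have "A = {}" using A by blast
        then show False using gg assms \<open>m = 1\<close> by simp
      qed
      have "(m, A) \<in> P" unfolding P_def using A m2 gg by auto
      then show "S \<in> phi ` P" using Seq by blast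
    qed
  qed
  have "card ?T = card P" unfolding eq using inj by (rule card_image)
  also have "\<dots> = (\<Sum>m=2..g+1. card {A. A \<subseteq> {m<..<2*m} \<and> card A = g + 1 - m})"
    unfolding P_def
    by (rule card_SigmaI) auto
  also have "\<dots> = (\<Sum>m=2..g+1. (m - 1) choose (g + 1 - m))"
  proof (rule sum.cong)
    fix m assume "m \<in> {2..g+1}"
    have "card {A. A \<subseteq> {m<..<2*m} \<and> card A = g + 1 - m} = card {m<..<2*m} choose (g + 1 - m)"
      by (rule n_subsets) simp
    then show "card {A. A \<subseteq> {m<..<2*m} \<and> card A = g + 1 - m} = (m - 1) choose (g + 1 - m)"
      by simp
  qed simp
  also have "\<dots> = fib (g + 1)" using sum_fib[OF assms] .
  finally show ?thesis .
qed

end
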